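(* Let $f:\mathbb{R}^d\to\mathbb{R}$ with $f^*:=\sup_\theta f(\theta)<\infty$ and let $\epsilon\in(0,1)$. Assume (i) $f$ is $L$-smooth; (ii) $f$ satisfies the non-uniform Łojasiewicz condition with $\xi=0$: $\|\nabla f(\theta)\|_2\ge C(\theta)|f^*-f(\theta)|$ for all $\theta$, for some $C:\mathbb{R}^d\to(0,\infty)$. Run $\theta_{t+1}=\theta_t+\eta_t\hat g(\theta_t)$, where (a) $\hat g(\theta)$ is a stochastic gradient with $\mathbb{E}[\hat g(\theta)]=\nabla f(\theta)$ and $\mathbb{E}\|\hat g(\theta)-\nabla f(\theta)\|_2^2\le\sigma^2$, and (b) $\eta_t=\eta_0\alpha^t$ with $\eta_0=1/L$, $\alpha=(\beta/T)^{1/T}$, $\beta\ge1$. Assume (iii) $\mu:=\Big[\mathbb{E}\big[\big(\inf_{t\ge1}[C(\theta_t)]^2\big)^{-1}\big]\Big]^{-1}>0$. Then, if $\mathbb{E}[f^*-f(\theta_t)]>\epsilon$ for all $t\in[1,T]$, $$\mathbb{E}[f^*-f(\theta_{T+1})]\le \mathbb{E}[f^*-f(\theta_1)]\,C_1\exp\Big(-\frac{\alpha\,\epsilon\,T}{\kappa\ln(T/\beta)}\Big)+\frac{C_1C_2}{2L}\frac{\ln^2(T/\beta)\,\sigma^2}{\epsilon^2 T},$$ where $\kappa:=2L/\mu$, $C_1:=\exp\big(\frac{2\beta}{\kappa\ln(T/\beta)}\big)$, $C_2:=\frac{4\kappa^2}{e^2\alpha^2}$. Otherwise $\min_{t\i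n[1,T]}\mathbb{E}[f^*-f(\theta_t)]\le\epsilon$.
   Context: $f$ is $L$-smooth means $|f(\theta)-f(\theta')-\langle\nabla f(\theta'),\theta-\theta'\rangle|\le\frac L2\|\theta-\theta'\|_2^2$ for all $\theta,\theta'$. Expectations are over the randomness of the stochastic gradients along the trajectory. *)

theory Defs
  imports "HOL-Probability.Probability"
begin

definition L_smooth :: "real \<Rightarrow> ('a::euclidean_space \<Rightarrow> real) \<Rightarrow> ('a \<Rightarrow> 'a) \<Rightarrow> bool" where
  "L_smooth L f grad \<longleftrightarrow>
     (\<forall>\<theta> \<theta>'. \<bar>f \<theta> - f \<theta>' - grad \<theta>' \<bullet> (\<theta> - \<theta>')\<bar> \<le> L / 2 * (norm (\<theta> - \<theta>'))\<^sup>2)"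

definition is_filtration :: "'b measure \<Rightarrow> (nat \<Rightarrow> 'b measure) \<Rightarrow> bool" where
  "is_filtration M F \<longleftrightarrow> (\<forall>t. subalgebra M (F t) \<and> sets (F t) \<subseteq> sets (F (Suc t)))"

end

theory Submission imports Defs begin

lemma smooth_lower:
  assumes "L_smooth L f grad"
  shows "f y \<ge> f x + grad x \<bullet> (y - x) - L/2 * (norm (y - x))\<^sup>2"
  using assms unfolding L_smooth_def by (smt (verit, best))

lemma grad_sq_bound:
  fixes f :: "'a::euclidean_space \<Rightarrow> real"
  assumes bdd: "bdd_above (range f)" and L0: "L > 0" and sm: "L_smooth L f grad"
  shows "(norm (grad x))\<^sup>2 \<le> 2*L*(Sup (range f) - f x)"
proof -
  define y where "y = x + (1/L) *\<^sub>R grad x"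
  have sl: "f y \<ge> f x + grad x \<bullet> (y - x) - L/2 * (norm (y - x))\<^sup>2" by (rule smooth_lower[OF sm])
  have e1: "grad x \<bullet> (y - x) = (norm (grad x))\<^sup>2 / L"
    by (simp add: y_def power2_norm_eq_inner)
  have e2: "(norm (y - x))\<^sup>2 = (norm (grad x))\<^sup>2 / L^2"
    using L0 by (simp add: y_def power_divide power_mult_distrib)
  have "f y \<le> Sup (range f)" using bdd by (simp add: cSUP_upper)
  moreover note sl[unfolded e1 e2]
  ultimately have "f x + (norm (grad x))\<^sup>2 / L - L/2 * ((norm (grad x))\<^sup>2 / L^2) \<le> Sup (range f)" by linarith
  moreover have "L/2 * ((norm (grad x))\<^sup>2 / L^2) = (norm (grad x))\<^sup>2 / (2*L)"
    using L0 by (simp add: power2_eq_square field_simps)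
  ultimately have "(norm (grad x))\<^sup>2 / (2*L) \<le> Sup (range f) - f x" by (simp add: field_simps)
  then show ?thesis using L0 by (simp add: field_simps)
qed

lemma grad_meas:
  fixes f :: "'a::euclidean_space \<Rightarrow> real"
  assumes sm: "L_smooth L f grad" and fm: "f \<in> borel_measurable borel"
  shows "grad \<in> borel_measurable borel"
proof (subst borel_measurable_euclidean_space, intro ballI)
  fix b :: 'a assume b: "b \<in> Basis"
  define u where "u n x = (f (x + (1 / real (Suc n)) *\<^sub>R b) - f x) * real (Suc n)" for n x
  show "(\<lambda>x. grad x \<bullet> b) \<in> borel_measurable borel"
  proof (rule borel_measurable_LIMSEQ_real[where u=u])
    fix n show "u n \<in> borel_measurable borel" unfolding u_def using fm by measurable
  next
    fix x :: 'a
    have bd: "norm (u n x - grad x \<bullet> b) \<le> \<bar>L\<bar> / 2 * inverse (real (Suc n))" for n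
    proof -
      define h where "h = 1 / real (Suc n)"
      have h0: "h > 0" by (simp add: h_def)
      have "\<bar>f (x + h *\<^sub>R b) - f x - grad x \<bullet> ((x + h *\<^sub>R b) - x)\<bar> \<le> L/2 * (norm ((x + h *\<^sub>R b) - x))\<^sup>2"
        using sm unfolding L_smooth_def by blast
      then have "\<bar>f (x + h *\<^sub>R b) - f x - h * (grad x \<bullet> b)\<bar> \<le> L/2 * h^2"
        using b h0 by simp
      then have "\<bar>f (x + h *\<^sub>R b) - f x - h * (grad x \<bullet> b)\<bar> * real (Suc n) \<le> L/2 * h^2 * real (Suc n)"
        by (intro mult_right_mono) auto
      moreover have "\<bar>f (x + h *\<^sub>R b) - f x - h * (grad x \<bullet> b)\<bar> * real (Suc n) = norm (u n x - grad x \<bullet> b)"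
        unfolding u_def h_def by (simp add: abs_mult[symmetric] field_simps del: of_nat_Suc)
      moreover have "L/2 * h^2 * real (Suc n) \<le> \<bar>L\<bar> / 2 * inverse (real (Suc n))"
        unfolding h_def by (simp add: power2_eq_square field_simps del: of_nat_Suc)
      ultimately show ?thesis by linarith
    qed
    have "(\<lambda>n. u n x - grad x \<bullet> b) \<longlonglongrightarrow> 0"
    proof (rule Lim_null_comparison[OF always_eventually])
      show "\<forall>n. norm (u n x - grad x \<bullet> b) \<le> \<bar>L\<bar> / 2 * inverse (real (Suc n))" using bd by blast
      show "(\<lambda>n. \<bar>L\<bar> / 2 * inverse (real (Suc n))) \<longlonglongrightarrow> 0"
        using tendsto_mult_right_zero[OF LIMSEQ_inverse_real_of_nat] by simp
    qed
    then show "(\<lambda>n. u n x) \<longlonglongrightarrow> grad x \<bullet> b" by (rule LIM_zero_cancel)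
  qed
qed

lemma lin_aux: fixes x1 x2 x3 x4 x5 x6 x7 :: real
  assumes "x1 \<le> x2 - x3 + x4*(x5 + x6)" "x4*x6 \<le> x3/2" "x4*x5 \<le> x4*x7"
  shows "x1 \<le> x2 - x3/2 + x4*x7"
proof -
  have "x4*(x5+x6) = x4*x5 + x4*x6" by (simp add: distrib_left)
  then show ?thesis using assms by linarith
qed

lemma sq_sum_le: fixes p q :: real shows "(p + q)\<^sup>2 \<le> 2*p\<^sup>2 + 2*q\<^sup>2"
proof -
  have "0 \<le> (p - q)\<^sup>2" by simp
  then show ?thesis by (simp add: power2_eq_square algebra_simps)
qed

lemma prod_le_sq: fixes p q :: real assumes "p \<ge> 0" "q \<ge> 0" shows "p * q \<le> p\<^sup>2 + q\<^sup>2"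
proof -
  have "0 \<le> (p - q)\<^sup>2" by simp
  moreover have "0 \<le> p * q" using assms by simp
  ultimately show ?thesis by (simp add: power2_eq_square algebra_simps)
qed

lemma norm_sq_split:
  fixes u v :: "'a::real_inner"
  shows "(norm u)\<^sup>2 \<le> 2*(norm v)\<^sup>2 + 2*(norm (u - v))\<^sup>2"
proof -
  have "norm u \<le> norm v + norm (u - v)" using norm_triangle_ineq[of v "u - v"] by simp
  then have "(norm u)\<^sup>2 \<le> (norm v + norm (u - v))\<^sup>2" by (intro power_mono) auto
  also have "\<dots> \<le> 2*(norm v)\<^sup>2 + 2*(norm (u - v))\<^sup>2"
    by (rule sq_sum_le)
  finally show ?thesis .
qed

lemma basis_prod_bound:
  fixes x y :: "'a::euclidean_space"
  assumes "b \<in> Basis"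
  shows "\<bar>(x \<bullet> b) * (y \<bullet> b)\<bar> \<le> (norm x)\<^sup>2 + (norm y)\<^sup>2"
proof -
  have "\<bar>x \<bullet> b\<bar> \<le> norm x" "\<bar>y \<bullet> b\<bar> \<le> norm y" using Basis_le_norm[OF assms] by auto
  then have "\<bar>x \<bullet> b\<bar> * \<bar>y \<bullet> b\<bar> \<le> norm x * norm y" by (intro mult_mono) auto
  also have "\<dots> \<le> (norm x)\<^sup>2 + (norm y)\<^sup>2" by (rule prod_le_sq) auto
  finally show ?thesis by (simp add: abs_mult)
qed

lemma norm_diff_sq:
  fixes a g :: "'a::real_inner"
  shows "(norm (g - a))\<^sup>2 = (norm g)\<^sup>2 - 2*(a \<bullet> g) + (norm a)\<^sup>2"
  by (simp add: power2_norm_eq_inner inner_diff_left inner_diff_right inner_commute)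


lemma sq_exp_bound:
  fixes x y :: real assumes "x > 0" "y \<ge> 0"
  shows "y^2 * exp (-(x*y)) \<le> 4 / ((exp 1)^2 * x^2)"
proof -
  define z where "z = x*y/2"
  have z0: "z \<ge> 0" using assms by (simp add: z_def)
  have "z \<le> exp (z - 1)" using exp_ge_add_one_self[of "z-1"] by simp
  hence "z * exp (-z) \<le> exp (z-1) * exp(-z)" by (simp add: mult_right_mono)
  also have "\<dots> = exp (-1)" by (simp add: exp_add[symmetric])
  finally have h: "z * exp (-z) \<le> exp (-1)" .
  have h2: "(z*exp(-z))^2 \<le> (exp(-1))^2" using h z0 by (intro power_mono) auto
  have y: "y = 2*z/x" using assms by (simp add: z_def)
  have e1: "exp(-z)^2 = exp(-z + -z)" unfolding power2_eq_square exp_add by simp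
  have e2: "-z + -z = -(x*y)" by (simp add: z_def)
  have e: "exp(-(x*y)) = exp(-z)^2" using e1 e2 by simp
  have gen: "\<And>w. (2*z/x)^2 * w^2 = 4/x^2 * (z*w)^2" using assms by (simp add: field_simps power2_eq_square)
  have "y^2 * exp(-(x*y)) = 4/x^2 * (z*exp(-z))^2"
    by (subst e, subst y, rule gen)
  also have "\<dots> \<le> 4/x^2 * (exp(-1))^2" using h2 by (intro mult_left_mono) auto
  also have "\<dots> = 4/((exp 1)^2 * x^2)" by (simp add: exp_minus field_simps)
  finally show ?thesis .
qed

lemma unroll:
  fixes E q c :: "nat \<Rightarrow> real" and T :: nat
  assumes Enn: "\<And>t. 1 \<le> t \<Longrightarrow> t \<le> T \<Longrightarrow> E t \<ge> 0"
    and rec: "\<And>t. 1 \<le> t \<Longrightarrow> t \<le> T \<Longrightarrow> E (t+1) \<le> (1 - q t) * E t + c t"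
  shows "k \<le> T \<Longrightarrow> E (k+1) \<le> exp (-(\<Sum>s\<in>{1..k}. q s)) * E 1
           + (\<Sum>t\<in>{1..k}. c t * exp (-(\<Sum>s\<in>{t+1..k}. q s)))"
proof (induction k)
  case 0
  then show ?case by simp
next
  case (Suc k)
  have IH: "E (k+1) \<le> exp (-(\<Sum>s\<in>{1..k}. q s)) * E 1
           + (\<Sum>t\<in>{1..k}. c t * exp (-(\<Sum>s\<in>{t+1..k}. q s)))" using Suc by simp
  have "E (Suc k + 1) \<le> (1 - q (k+1)) * E (k+1) + c (k+1)" using rec[of "k+1"] Suc by simp
  also have "\<dots> \<le> exp (- q (k+1)) * E (k+1) + c (k+1)"
    using Enn[of "k+1"] Suc exp_ge_add_one_self[of "- q (k+1)"] by (intro add_right_mono mult_right_mono) auto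
  also have "\<dots> \<le> exp (- q (k+1)) * (exp (-(\<Sum>s\<in>{1..k}. q s)) * E 1
           + (\<Sum>t\<in>{1..k}. c t * exp (-(\<Sum>s\<in>{t+1..k}. q s)))) + c (k+1)"
    using IH by (intro add_right_mono mult_left_mono) auto
  also have "\<dots> = exp (-(\<Sum>s\<in>{1..Suc k}. q s)) * E 1
           + (\<Sum>t\<in>{1..Suc k}. c t * exp (-(\<Sum>s\<in>{t+1..Suc k}. q s)))"
  proof -
    have a: "exp (- q (k+1)) * exp (-(\<Sum>s\<in>{1..k}. q s)) = exp (-(\<Sum>s\<in>{1..Suc k}. q s))"
      by (simp add: exp_add[symmetric])
    have b: "exp (- q (k+1)) * (\<Sum>t\<in>{1..k}. c t * exp (-(\<Sum>s\<in>{t+1..k}. q s)))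
        = (\<Sum>t\<in>{1..k}. c t * exp (-(\<Sum>s\<in>{t+1..Suc k}. q s)))"
      unfolding sum_distrib_left
    proof (rule sum.cong)
      fix t assume "t \<in> {1..k}"
      then have "(\<Sum>s\<in>{t+1..Suc k}. q s) = (\<Sum>s\<in>{t+1..k}. q s) + q (Suc k)"
        by (simp add: sum.cl_ivl_Suc)
      then show "exp (- q (k+1)) * (c t * exp (-(\<Sum>s\<in>{t+1..k}. q s))) = c t * exp (-(\<Sum>s\<in>{t+1..Suc k}. q s))"
        by (simp add: exp_add[symmetric] algebra_simps)
    qed simp
    have c: "(\<Sum>t\<in>{1..Suc k}. c t * exp (-(\<Sum>s\<in>{t+1..Suc k}. q s))) =
       (\<Sum>t\<in>{1..k}. c t * exp (-(\<Sum>s\<in>{t+1..Suc k}. q s))) + c (k+1)"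
      by (simp add: sum.cl_ivl_Suc)
    show ?thesis unfolding c using a b by (simp add: algebra_simps)
  qed
  finally show ?case .
qed

lemma final_bound:
  fixes E :: "nat \<Rightarrow> real" and \<beta> \<epsilon> \<kappa> L \<sigma> :: real and T :: nat
  assumes b1: "1 \<le> \<beta>" and bT: "\<beta> < real T" and e0: "0<\<epsilon>" and e1: "\<epsilon><1" and k0: "\<kappa>>0" and L0: "L>0"
   and Enn: "\<And>t. 1\<le>t \<Longrightarrow> t\<le>T \<Longrightarrow> E t \<ge> 0"
   and rec: "\<And>t. 1\<le>t \<Longrightarrow> t\<le>T \<Longrightarrow> E (t+1) \<le> (1 - ((\<beta>/real T) powr (1/real T))^t*\<epsilon>/\<kappa>) * E t
                 + ((\<beta>/real T) powr (1/real T))^(2*t)*\<sigma>\<^sup>2/(2*L)"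
  shows "E (T + 1) \<le> E 1 * exp (2 * \<beta> / (\<kappa> * ln (real T / \<beta>))) * exp (- (((\<beta>/real T) powr (1/real T)) * \<epsilon> * real T / (\<kappa> * ln (real T / \<beta>))))
                 + exp (2 * \<beta> / (\<kappa> * ln (real T / \<beta>))) * (4 * \<kappa>\<^sup>2 / ((exp 1)\<^sup>2 * ((\<beta>/real T) powr (1/real T))\<^sup>2)) / (2 * L) * ((ln (real T / \<beta>))\<^sup>2 * \<sigma>\<^sup>2 / (\<epsilon>\<^sup>2 * real T))"
proof -
  define \<alpha> where "\<alpha> = (\<beta>/real T) powr (1/real T)"
  define l where "l = ln (real T / \<beta>)"
  define C1 where "C1 = exp (2 * \<beta> / (\<kappa> * l))"
  have T0: "real T > 0" using b1 bT by linarith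
  have T1: "T \<ge> 1" using T0 by simp
  have bT0: "\<beta>/real T > 0" using b1 T0 by simp
  have bT1: "\<beta>/real T < 1" using bT T0 by simp
  have a0: "\<alpha> > 0" using bT0 b1 T0 by (simp add: \<alpha>_def)
  have a1: "\<alpha> < 1" unfolding \<alpha>_def using powr_less_mono2[of "1/real T" "\<beta>/real T" 1] bT0 bT1 T0 by simp
  have l0: "l > 0" unfolding l_def using bT b1 by simp
  have aT: "\<alpha>^T = \<beta>/real T"
  proof -
    have "\<alpha>^T = \<alpha> powr real T" using a0 by (simp add: powr_realpow)
    also have "\<dots> = \<beta>/real T" unfolding \<alpha>_def using T0 bT0 b1 by (simp add: powr_powr)
    finally show ?thesis .
  qed
  have lna: "ln \<alpha> = - l / real T"
    unfolding \<alpha>_def l_def using bT0 T0 b1 by (simp add: ln_powr ln_div)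
  have oma: "1 - \<alpha> \<le> l / real T" using ln_le_minus_one[OF a0] lna by simp
  have oma0: "1 - \<alpha> > 0" using a1 by simp
  define G where "G t = (\<Sum>s\<in>{t+1..T}. \<alpha>^s)" for t
  have geo: "G t \<ge> (\<alpha>^(t+1) - \<alpha>*\<beta>/real T) * real T / l" if tT: "t \<le> T" for t
  proof -
    have eq: "(1-\<alpha>) * G t = \<alpha>^(t+1) - \<alpha>^(T+1)"
    proof (cases "t < T")
      case True
      then show ?thesis unfolding G_def using sum_gp_multiplied[of "t+1" T \<alpha>] by simp
    next
      case False
      then show ?thesis using tT unfolding G_def by simp
    qed
    have aT1: "\<alpha>^(T+1) = \<alpha>*\<beta>/real T" using aT by simp
    have dnn: "\<alpha>^(t+1) - \<alpha>^(T+1) \<ge> 0" using a0 a1 tT by (simp add: power_decreasing)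
    have "G t = (\<alpha>^(t+1) - \<alpha>^(T+1)) / (1-\<alpha>)" using eq oma0 by (simp add: field_simps)
    also have "\<dots> \<ge> (\<alpha>^(t+1) - \<alpha>^(T+1)) / (l / real T)"
      using dnn oma oma0 l0 T0 by (intro divide_left_mono) auto
    finally show ?thesis using aT1 by simp
  qed
  define q where "q s = \<alpha>^s*\<epsilon>/\<kappa>" for s
  define c where "c t = \<alpha>^(2*t)*\<sigma>\<^sup>2/(2*L)" for t
  have un: "E (T+1) \<le> exp (-(\<Sum>s\<in>{1..T}. q s)) * E 1
           + (\<Sum>t\<in>{1..T}. c t * exp (-(\<Sum>s\<in>{t+1..T}. q s)))"
    by (rule unroll[of T E q c]) (use Enn rec in \<open>auto simp: q_def c_def \<alpha>_def\<close>)
  have sq: "(\<Sum>s\<in>{t+1..T}. q s) = \<epsilon>/\<kappa> * G t" for t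
    unfolding q_def G_def by (simp add: sum_distrib_left field_simps)
  have aeb: "\<alpha>*\<epsilon>*\<beta> \<le> 2*\<beta>"
  proof -
    have "\<alpha>*\<epsilon> \<le> 1" using a0 a1 e0 e1 by (simp add: mult_le_one)
    then have "\<alpha>*\<epsilon>*\<beta> \<le> 1*\<beta>" using b1 by (intro mult_right_mono) auto
    then show ?thesis using b1 by linarith
  qed
  have key: "\<epsilon>/\<kappa> * G t \<ge> \<alpha>^t * (\<alpha>*\<epsilon>*real T/(\<kappa>*l)) - 2*\<beta>/(\<kappa>*l)" if "t \<le> T" for t
  proof -
    have "\<epsilon>/\<kappa> * G t \<ge> \<epsilon>/\<kappa> * ((\<alpha>^(t+1) - \<alpha>*\<beta>/real T) * real T / l)"
      using geo[OF that] e0 k0 by (intro mult_left_mono) auto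
    moreover have "\<epsilon>/\<kappa> * ((\<alpha>^(t+1) - \<alpha>*\<beta>/real T) * real T / l)
       = \<alpha>^t * (\<alpha>*\<epsilon>*real T/(\<kappa>*l)) - \<alpha>*\<epsilon>*\<beta>/(\<kappa>*l)"
      using T0 k0 l0 by (simp add: field_simps)
    moreover have "\<alpha>*\<epsilon>*\<beta>/(\<kappa>*l) \<le> 2*\<beta>/(\<kappa>*l)"
      using aeb k0 l0 by (intro divide_right_mono) auto
    ultimately show ?thesis by linarith
  qed
  define x where "x = \<alpha>*\<epsilon>*real T/(\<kappa>*l)"
  have x0: "x > 0" unfolding x_def using a0 e0 T0 k0 l0 by simp
  have t1: "exp (-(\<Sum>s\<in>{1..T}. q s)) * E 1 \<le> E 1 * C1 * exp (-x)"
  proof -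
    have "exp (-(\<Sum>s\<in>{1..T}. q s)) \<le> exp (-(\<alpha>^0 * x - 2*\<beta>/(\<kappa>*l)))"
      using sq[of 0] key[of 0] unfolding x_def by simp
    also have "\<dots> = C1 * exp (-x)" unfolding C1_def by (simp add: exp_add[symmetric])
    finally have "exp (-(\<Sum>s\<in>{1..T}. q s)) \<le> C1 * exp (-x)" .
    then have "exp (-(\<Sum>s\<in>{1..T}. q s)) * E 1 \<le> C1 * exp (-x) * E 1"
      using Enn[of 1] T1 by (intro mult_right_mono) auto
    then show ?thesis by (simp add: algebra_simps)
  qed
  have t2: "c t * exp (-(\<Sum>s\<in>{t+1..T}. q s)) \<le> \<sigma>\<^sup>2/(2*L) * C1 * (4 / ((exp 1)^2 * x^2))"
    if "t \<in> {1..T}" for t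
  proof -
    have "exp (-(\<Sum>s\<in>{t+1..T}. q s)) \<le> exp (-(\<alpha>^t * x - 2*\<beta>/(\<kappa>*l)))"
      using sq[of t] key[of t] that unfolding x_def by simp
    also have "\<dots> = C1 * exp (-(x*\<alpha>^t))" unfolding C1_def by (simp add: exp_add[symmetric] mult.commute)
    finally have h: "exp (-(\<Sum>s\<in>{t+1..T}. q s)) \<le> C1 * exp (-(x*\<alpha>^t))" .
    have cnn: "c t \<ge> 0" unfolding c_def using L0 by simp
    have "c t * exp (-(\<Sum>s\<in>{t+1..T}. q s)) \<le> c t * (C1 * exp (-(x*\<alpha>^t)))"
      using h cnn by (intro mult_left_mono) auto
    also have "\<dots> = \<sigma>\<^sup>2/(2*L) * C1 * ((\<alpha>^t)^2 * exp (-(x*\<alpha>^t)))"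
      unfolding c_def by (simp add: power_mult[symmetric] mult.commute)
    also have "\<dots> \<le> \<sigma>\<^sup>2/(2*L) * C1 * (4 / ((exp 1)^2 * x^2))"
      using sq_exp_bound[OF x0, of "\<alpha>^t"] a0 L0 unfolding C1_def by (intro mult_left_mono) auto
    finally show ?thesis .
  qed
  have t2s: "(\<Sum>t\<in>{1..T}. c t * exp (-(\<Sum>s\<in>{t+1..T}. q s))) \<le> real T * (\<sigma>\<^sup>2/(2*L) * C1 * (4 / ((exp 1)^2 * x^2)))"
    using sum_bounded_above[of "{1..T}" _ "\<sigma>\<^sup>2/(2*L) * C1 * (4 / ((exp 1)^2 * x^2))", OF t2] by simp
  have eqf: "real T * (\<sigma>\<^sup>2/(2*L) * C1 * (4 / ((exp 1)^2 * x^2)))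
     = C1 * (4 * \<kappa>\<^sup>2 / ((exp 1)\<^sup>2 * \<alpha>\<^sup>2)) / (2 * L) * (l\<^sup>2 * \<sigma>\<^sup>2 / (\<epsilon>\<^sup>2 * real T))"
    unfolding x_def using T0 k0 l0 a0 e0 L0 by (simp add: field_simps power2_eq_square)
  have "E (T+1) \<le> E 1 * C1 * exp (-x) + C1 * (4 * \<kappa>\<^sup>2 / ((exp 1)\<^sup>2 * \<alpha>\<^sup>2)) / (2 * L) * (l\<^sup>2 * \<sigma>\<^sup>2 / (\<epsilon>\<^sup>2 * real T))"
    using un t1 t2s eqf by linarith
  then show ?thesis unfolding x_def C1_def l_def \<alpha>_def .
qed


theorem theorem3:
  fixes M :: "'b measure" and F :: "nat \<Rightarrow> 'b measure"
    and f :: "'a::euclidean_space \<Rightarrow> real" and grad :: "'a \<Rightarrow> 'a"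
    and C :: "'a \<Rightarrow> real"
    and \<theta> :: "nat \<Rightarrow> 'b \<Rightarrow> 'a" and g :: "nat \<Rightarrow> 'b \<Rightarrow> 'a"
    and L \<sigma> \<epsilon> \<beta> :: real and T :: nat
  assumes prob: "prob_space M"
    and filt: "is_filtration M F"
    and bdd: "bdd_above (range f)"
    and grad: "\<And>x. (f has_derivative (\<lambda>h. grad x \<bullet> h)) (at x)"
    and Lpos: "L > 0"
    and smooth: "L_smooth L f grad"
    and Cpos: "\<And>x. C x > 0"
    and loj: "\<And>x. norm (grad x) \<ge> C x * \<bar>Sup (range f) - f x\<bar>"
    and eps: "0 < \<epsilon>" "\<epsilon> < 1"
    and beta: "\<beta> \<ge> 1" "\<beta> < real T"
    and adapted: "\<And>t. t \<ge> 1 \<Longrightarrow> \<theta> t \<in> borel_measurable (F t)"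
    and g_meas: "\<And>t. t \<ge> 1 \<Longrightarrow> g t \<in> borel_measurable M"
    and g_sq_int: "\<And>t. t \<ge> 1 \<Longrightarrow> integrable M (\<lambda>\<omega>. (norm (g t \<omega> - grad (\<theta> t \<omega>)))\<^sup>2)"
    and unbiased: "\<And>t b. t \<ge> 1 \<Longrightarrow> b \<in> Basis \<Longrightarrow>
        AE \<omega> in M. real_cond_exp M (F t) (\<lambda>\<omega>. g t \<omega> \<bullet> b) \<omega> = grad (\<theta> t \<omega>) \<bullet> b"
    and variance: "\<And>t. t \<ge> 1 \<Longrightarrow>
        AE \<omega> in M. real_cond_exp M (F t) (\<lambda>\<omega>. (norm (g t \<omega> - grad (\<theta> t \<omega>)))\<^sup>2) \<omega> \<le> \<sigma>\<^sup>2"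
    and update: "\<And>t \<omega>. t \<ge> 1 \<Longrightarrow>
        \<theta> (t + 1) \<omega> = \<theta> t \<omega> + ((1 / L) * ((\<beta> / real T) powr (1 / real T)) ^ t) *\<^sub>R g t \<omega>"
    and mu_meas: "(\<lambda>\<omega>. inverse (ennreal (INF t\<in>{1..}. (C (\<theta> t \<omega>))\<^sup>2))) \<in> borel_measurable M"
    and mu_pos: "(\<integral>\<^sup>+\<omega>. inverse (ennreal (INF t\<in>{1..}. (C (\<theta> t \<omega>))\<^sup>2)) \<partial>M) < \<infinity>"
  shows "let fstar = Sup (range f);
             E = (\<lambda>t. \<integral>\<omega>. fstar - f (\<theta> t \<omega>) \<partial>M);
             \<alpha> = (\<beta> / real T) powr (1 / real T);
             \<mu> = 1 / enn2real (\<integral>\<^sup>+\<omega>. inverse (ennreal (INF t\<in>{1..}. (C (\<theta> t \<omega>))\<^sup>2)) \<partial>M);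
             \<kappa> = 2 * L / \<mu>;
             C1 = exp (2 * \<beta> / (\<kappa> * ln (real T / \<beta>)));
             C2 = 4 * \<kappa>\<^sup>2 / ((exp 1)\<^sup>2 * \<alpha>\<^sup>2)
         in ((\<forall>t\<in>{1..T}. E t > \<epsilon>) \<longrightarrow>
               E (T + 1) \<le> E 1 * C1 * exp (- (\<alpha> * \<epsilon> * real T / (\<kappa> * ln (real T / \<beta>))))
                 + C1 * C2 / (2 * L) * ((ln (real T / \<beta>))\<^sup>2 * \<sigma>\<^sup>2 / (\<epsilon>\<^sup>2 * real T)))
          \<and> (\<not> (\<forall>t\<in>{1..T}. E t > \<epsilon>) \<longrightarrow> Min (E ` {1..T}) \<le> \<epsilon>)"
proof -
  interpret P: prob_space M by (rule prob)
  define fstar where "fstar = Sup (range f)"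
  define \<alpha> where "\<alpha> = (\<beta> / real T) powr (1 / real T)"
  define Ih where "Ih \<omega> = (INF t\<in>{1..}. (C (\<theta> t \<omega>))\<^sup>2)" for \<omega>
  define Inv where "Inv \<omega> = inverse (ennreal (Ih \<omega>))" for \<omega>
  define K where "K = enn2real (\<integral>\<^sup>+\<omega>. Inv \<omega> \<partial>M)"
  define Hf where "Hf \<omega> = enn2real (Inv \<omega>)" for \<omega>
  define \<delta> where "\<delta> t \<omega> = fstar - f (\<theta> t \<omega>)" for t \<omega>
  define E where "E t = (\<integral>\<omega>. \<delta> t \<omega> \<partial>M)" for t
  define A where "A t = (\<integral>\<omega>. (norm (grad (\<theta> t \<omega>)))\<^sup>2 \<partial>M)" for t
  have fle: "\<And>x. f x \<le> fstar" using bdd unfolding fstar_def by (simp add: cSUP_upper)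
  have \<delta>nn: "\<And>t \<omega>. \<delta> t \<omega> \<ge> 0" using fle by (simp add: \<delta>_def)
  have gb: "\<And>x. (norm (grad x))\<^sup>2 \<le> 2*L*(fstar - f x)"
    unfolding fstar_def by (rule grad_sq_bound[OF bdd Lpos smooth])
  have fcont: "continuous_on UNIV f"
    using grad by (meson has_derivative_continuous continuous_at_imp_continuous_on)
  have fm[measurable]: "f \<in> borel_measurable borel" by (rule borel_measurable_continuous_onI[OF fcont])
  have gm[measurable]: "grad \<in> borel_measurable borel" by (rule grad_meas[OF smooth fm])
  have subalg: "\<And>t. subalgebra M (F t)" using filt unfolding is_filtration_def by blast
  have thmeas: "\<And>t. t \<ge> 1 \<Longrightarrow> \<theta> t \<in> borel_measurable M"
    using measurable_from_subalg[OF subalg adapted] by blast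
  have T0: "real T > 0" using beta by linarith
  have a0: "\<alpha> > 0" unfolding \<alpha>_def using beta T0 by simp
  have a1: "\<alpha> \<le> 1" unfolding \<alpha>_def using powr_less_mono2[of "1/real T" "\<beta>/real T" 1] beta T0 by simp
  have Inv_meas[measurable]: "Inv \<in> borel_measurable M" using mu_meas unfolding Inv_def Ih_def .
  have Inv_fin: "(\<integral>\<^sup>+\<omega>. Inv \<omega> \<partial>M) \<noteq> \<infinity>" using mu_pos unfolding Inv_def Ih_def by simp
  have AE_Inv: "AE \<omega> in M. Inv \<omega> \<noteq> \<infinity>" by (rule nn_integral_PInf_AE[OF Inv_meas Inv_fin])
  have AE_H: "AE \<omega> in M. Ih \<omega> > 0 \<and> Hf \<omega> = 1 / Ih \<omega> \<and> ennreal (Hf \<omega>) = Inv \<omega>"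
    using AE_Inv
  proof (rule eventually_mono)
    fix \<omega> assume "Inv \<omega> \<noteq> \<infinity>"
    then have "ennreal (Ih \<omega>) \<noteq> 0" unfolding Inv_def by auto
    then have pos: "Ih \<omega> > 0" by (simp add: ennreal_eq_0_iff)
    then have iv: "Inv \<omega> = ennreal (1 / Ih \<omega>)" unfolding Inv_def by (simp add: inverse_ennreal inverse_eq_divide)
    then have "Hf \<omega> = 1 / Ih \<omega>" unfolding Hf_def using pos by simp
    then show "Ih \<omega> > 0 \<and> Hf \<omega> = 1 / Ih \<omega> \<and> ennreal (Hf \<omega>) = Inv \<omega>" using pos iv by simp
  qed
  have Hm[measurable]: "Hf \<in> borel_measurable M" unfolding Hf_def by measurable
  have Hnn: "\<And>\<omega>. Hf \<omega> \<ge> 0" by (simp add: Hf_def)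
  have HK: "(\<integral>\<^sup>+\<omega>. ennreal (Hf \<omega>) \<partial>M) = ennreal K"
  proof -
    have "(\<integral>\<^sup>+\<omega>. ennreal (Hf \<omega>) \<partial>M) = (\<integral>\<^sup>+\<omega>. Inv \<omega> \<partial>M)"
      using AE_H by (intro nn_integral_cong_AE) auto
    also have "\<dots> = ennreal K" unfolding K_def using Inv_fin by (simp add: ennreal_enn2real_if)
    finally show ?thesis .
  qed
  have Hint: "integrable M Hf" by (rule integrableI_nn_integral_finite[OF Hm _ HK]) (simp add: Hnn)
  have HintK: "(\<integral>\<omega>. Hf \<omega> \<partial>M) = K"
    using integral_eq_nn_integral[OF Hm] HK Hnn by (simp add: K_def)
  have K0: "K \<ge> 0" by (simp add: K_def)
  have Ih_le: "\<And>t \<omega>. t \<ge> 1 \<Longrightarrow> Ih \<omega> \<le> (C (\<theta> t \<omega>))\<^sup>2"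
    unfolding Ih_def by (rule cINF_lower) (auto intro: bdd_belowI[of _ 0])
  have step: "integrable M (\<delta> (t+1)) \<and> integrable M (\<lambda>\<omega>. (norm (grad (\<theta> t \<omega>)))\<^sup>2) \<and>
      E (t+1) \<le> E t - (1/L*\<alpha>^t)/2 * A t + L*(1/L*\<alpha>^t)\<^sup>2/2*\<sigma>\<^sup>2"
    if t1: "t \<ge> 1" and di: "integrable M (\<delta> t)" for t
  proof -
    have fms: "finite_measure_subalgebra M (F t)"
      unfolding finite_measure_subalgebra_def finite_measure_subalgebra_axioms_def
      using subalg P.finite_measure_axioms by blast
    interpret S: sigma_finite_subalgebra M "F t" by (rule finite_measure_subalgebra_is_sigma_finite[OF fms])
    have [measurable]: "\<theta> t \<in> borel_measurable M" using thmeas t1 by blast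
    have [measurable]: "\<theta> t \<in> borel_measurable (F t)" using adapted t1 by blast
    have [measurable]: "\<theta> (t+1) \<in> borel_measurable M" using thmeas by simp
    have [measurable]: "g t \<in> borel_measurable M" using g_meas t1 by blast
    define \<eta> where "\<eta> = 1/L*\<alpha>^t"
    have \<eta>0: "\<eta> > 0" using Lpos a0 by (simp add: \<eta>_def)
    have \<eta>L: "L*\<eta> \<le> 1" using Lpos a0 a1 by (simp add: \<eta>_def power_le_one)
    have upd: "\<And>\<omega>. \<theta> (t+1) \<omega> = \<theta> t \<omega> + \<eta> *\<^sub>R g t \<omega>" using update[OF t1] by (simp add: \<eta>_def \<alpha>_def)
    have ia: "integrable M (\<lambda>\<omega>. (norm (grad (\<theta> t \<omega>)))\<^sup>2)"
    proof (rule Bochner_Integration.integrable_bound[OF integrable_mult_right[OF di, of "2*L"]])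
      show "(\<lambda>\<omega>. (norm (grad (\<theta> t \<omega>)))\<^sup>2) \<in> borel_measurable M" by measurable
      show "AE \<omega> in M. norm ((norm (grad (\<theta> t \<omega>)))\<^sup>2) \<le> norm (2*L*\<delta> t \<omega>)"
        by (intro AE_I2) (use gb \<delta>nn Lpos in \<open>auto simp: \<delta>_def\<close>)
    qed
    have inn: "integrable M (\<lambda>\<omega>. (norm (g t \<omega> - grad (\<theta> t \<omega>)))\<^sup>2)" using g_sq_int t1 by blast
    have ig: "integrable M (\<lambda>\<omega>. (norm (g t \<omega>))\<^sup>2)"
    proof (rule Bochner_Integration.integrable_bound[of M "\<lambda>\<omega>. 2*(norm (grad (\<theta> t \<omega>)))\<^sup>2 + 2*(norm (g t \<omega> - grad (\<theta> t \<omega>)))\<^sup>2"])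
      show "integrable M (\<lambda>\<omega>. 2*(norm (grad (\<theta> t \<omega>)))\<^sup>2 + 2*(norm (g t \<omega> - grad (\<theta> t \<omega>)))\<^sup>2)"
        using ia inn by simp
      show "(\<lambda>\<omega>. (norm (g t \<omega>))\<^sup>2) \<in> borel_measurable M" by measurable
      show "AE \<omega> in M. norm ((norm (g t \<omega>))\<^sup>2) \<le> norm (2*(norm (grad (\<theta> t \<omega>)))\<^sup>2 + 2*(norm (g t \<omega> - grad (\<theta> t \<omega>)))\<^sup>2)"
        by (intro AE_I2) (use norm_sq_split in auto)
    qed
    have ipb: "integrable M (\<lambda>\<omega>. (u \<omega> \<bullet> b) * (v \<omega> \<bullet> b))"
      if "b \<in> Basis" "integrable M (\<lambda>\<omega>. (norm (u \<omega>))\<^sup>2)" "integrable M (\<lambda>\<omega>. (norm (v \<omega>))\<^sup>2)"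
         "(\<lambda>\<omega>. (u \<omega> \<bullet> b) * (v \<omega> \<bullet> b)) \<in> borel_measurable M" for u v :: "'b \<Rightarrow> 'a" and b
    proof (rule Bochner_Integration.integrable_bound[of M "\<lambda>\<omega>. (norm (u \<omega>))\<^sup>2 + (norm (v \<omega>))\<^sup>2"])
      show "integrable M (\<lambda>\<omega>. (norm (u \<omega>))\<^sup>2 + (norm (v \<omega>))\<^sup>2)" using that by simp
      show "(\<lambda>\<omega>. (u \<omega> \<bullet> b) * (v \<omega> \<bullet> b)) \<in> borel_measurable M" using that by simp
      show "AE \<omega> in M. norm ((u \<omega> \<bullet> b) * (v \<omega> \<bullet> b)) \<le> norm ((norm (u \<omega>))\<^sup>2 + (norm (v \<omega>))\<^sup>2)"
        by (intro AE_I2) (use basis_prod_bound[OF that(1)] in auto)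
    qed
    have iab: "integrable M (\<lambda>\<omega>. (grad (\<theta> t \<omega>) \<bullet> b) * (g t \<omega> \<bullet> b))" if b: "b \<in> Basis" for b
      by (rule ipb[OF b ia ig]) measurable
    have iaa: "integrable M (\<lambda>\<omega>. (grad (\<theta> t \<omega>) \<bullet> b) * (grad (\<theta> t \<omega>) \<bullet> b))" if b: "b \<in> Basis" for b
      by (rule ipb[OF b ia ia]) measurable
    have ce: "(\<integral>\<omega>. (grad (\<theta> t \<omega>) \<bullet> b) * (g t \<omega> \<bullet> b) \<partial>M) = (\<integral>\<omega>. (grad (\<theta> t \<omega>) \<bullet> b) * (grad (\<theta> t \<omega>) \<bullet> b) \<partial>M)"
      if b: "b \<in> Basis" for b
    proof -
      have m1: "(\<lambda>\<omega>. grad (\<theta> t \<omega>) \<bullet> b) \<in> borel_measurable (F t)" by measurable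
      have m2: "(\<lambda>\<omega>. g t \<omega> \<bullet> b) \<in> borel_measurable M" by measurable
      have "(\<integral>\<omega>. (grad (\<theta> t \<omega>) \<bullet> b) * (g t \<omega> \<bullet> b) \<partial>M)
          = (\<integral>\<omega>. (grad (\<theta> t \<omega>) \<bullet> b) * real_cond_exp M (F t) (\<lambda>\<omega>. g t \<omega> \<bullet> b) \<omega> \<partial>M)"
        using S.real_cond_exp_intg(2)[OF _ m1 m2] iab[OF b] by simp
      also have "\<dots> = (\<integral>\<omega>. (grad (\<theta> t \<omega>) \<bullet> b) * (grad (\<theta> t \<omega>) \<bullet> b) \<partial>M)"
      proof (rule integral_cong_AE)
        show "(\<lambda>\<omega>. (grad (\<theta> t \<omega>) \<bullet> b) * real_cond_exp M (F t) (\<lambda>\<omega>. g t \<omega> \<bullet> b) \<omega>) \<in> borel_measurable M"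
          by measurable
        show "(\<lambda>\<omega>. (grad (\<theta> t \<omega>) \<bullet> b) * (grad (\<theta> t \<omega>) \<bullet> b)) \<in> borel_measurable M" by measurable
        show "AE \<omega> in M. (grad (\<theta> t \<omega>) \<bullet> b) * real_cond_exp M (F t) (\<lambda>\<omega>. g t \<omega> \<bullet> b) \<omega>
                = (grad (\<theta> t \<omega>) \<bullet> b) * (grad (\<theta> t \<omega>) \<bullet> b)"
          using unbiased[OF t1 b] by (rule eventually_mono) simp
      qed
      finally show ?thesis .
    qed
    have Eag: "(\<integral>\<omega>. grad (\<theta> t \<omega>) \<bullet> g t \<omega> \<partial>M) = A t"
    proof -
      have e1: "(\<lambda>\<omega>. grad (\<theta> t \<omega>) \<bullet> g t \<omega>) = (\<lambda>\<omega>. \<Sum>b\<in>Basis. (grad (\<theta> t \<omega>) \<bullet> b) * (g t \<omega> \<bullet> b))"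
        by (rule ext, rule euclidean_inner)
      have e2: "(\<lambda>\<omega>. (norm (grad (\<theta> t \<omega>)))\<^sup>2) = (\<lambda>\<omega>. \<Sum>b\<in>Basis. (grad (\<theta> t \<omega>) \<bullet> b) * (grad (\<theta> t \<omega>) \<bullet> b))"
        by (rule ext) (simp add: power2_norm_eq_inner euclidean_inner[of "grad _" "grad _"])
      have "(\<integral>\<omega>. grad (\<theta> t \<omega>) \<bullet> g t \<omega> \<partial>M) = (\<Sum>b\<in>Basis. (\<integral>\<omega>. (grad (\<theta> t \<omega>) \<bullet> b) * (g t \<omega> \<bullet> b) \<partial>M))"
        unfolding e1 by (rule Bochner_Integration.integral_sum) (rule iab)
      also have "\<dots> = (\<Sum>b\<in>Basis. (\<integral>\<omega>. (grad (\<theta> t \<omega>) \<bullet> b) * (grad (\<theta> t \<omega>) \<bullet> b) \<partial>M))"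
        by (rule sum.cong) (auto simp: ce)
      also have "\<dots> = A t"
        unfolding A_def e2 by (rule Bochner_Integration.integral_sum[symmetric]) (rule iaa)
      finally show ?thesis .
    qed
    have EN: "(\<integral>\<omega>. (norm (g t \<omega> - grad (\<theta> t \<omega>)))\<^sup>2 \<partial>M) \<le> \<sigma>\<^sup>2"
    proof -
      have "(\<integral>\<omega>. (norm (g t \<omega> - grad (\<theta> t \<omega>)))\<^sup>2 \<partial>M)
          = (\<integral>\<omega>. real_cond_exp M (F t) (\<lambda>\<omega>. (norm (g t \<omega> - grad (\<theta> t \<omega>)))\<^sup>2) \<omega> \<partial>M)"
        using S.real_cond_exp_int(2)[OF inn] by simp
      also have "\<dots> \<le> (\<integral>\<omega>. \<sigma>\<^sup>2 \<partial>M)"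
        by (rule integral_mono_AE[OF S.real_cond_exp_int(1)[OF inn] P.integrable_const variance[OF t1]])
      also have "\<dots> = \<sigma>\<^sup>2" by (simp add: P.prob_space)
      finally show ?thesis .
    qed
    have iag: "integrable M (\<lambda>\<omega>. grad (\<theta> t \<omega>) \<bullet> g t \<omega>)"
    proof (rule Bochner_Integration.integrable_bound[of M "\<lambda>\<omega>. (norm (grad (\<theta> t \<omega>)))\<^sup>2 + (norm (g t \<omega>))\<^sup>2"])
      show "integrable M (\<lambda>\<omega>. (norm (grad (\<theta> t \<omega>)))\<^sup>2 + (norm (g t \<omega>))\<^sup>2)" using ia ig by simp
      show "(\<lambda>\<omega>. grad (\<theta> t \<omega>) \<bullet> g t \<omega>) \<in> borel_measurable M" by measurable
      show "AE \<omega> in M. norm (grad (\<theta> t \<omega>) \<bullet> g t \<omega>) \<le> norm ((norm (grad (\<theta> t \<omega>)))\<^sup>2 + (norm (g t \<omega>))\<^sup>2)"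
      proof (intro AE_I2)
        fix \<omega>
        have "\<bar>grad (\<theta> t \<omega>) \<bullet> g t \<omega>\<bar> \<le> norm (grad (\<theta> t \<omega>)) * norm (g t \<omega>)" by (rule Cauchy_Schwarz_ineq2)
        also have "\<dots> \<le> (norm (grad (\<theta> t \<omega>)))\<^sup>2 + (norm (g t \<omega>))\<^sup>2" by (rule prod_le_sq) auto
        finally show "norm (grad (\<theta> t \<omega>) \<bullet> g t \<omega>) \<le> norm ((norm (grad (\<theta> t \<omega>)))\<^sup>2 + (norm (g t \<omega>))\<^sup>2)" by simp
      qed
    qed
    define R where "R \<omega> = \<delta> t \<omega> - \<eta>*(grad (\<theta> t \<omega>) \<bullet> g t \<omega>) + L/2*\<eta>\<^sup>2*((norm (g t \<omega> - grad (\<theta> t \<omega>)))\<^sup>2 + 2*(grad (\<theta> t \<omega>) \<bullet> g t \<omega>) - (norm (grad (\<theta> t \<omega>)))\<^sup>2)" for \<omega>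
    have iR: "integrable M R" unfolding R_def
      by (intro Bochner_Integration.integrable_add Bochner_Integration.integrable_diff integrable_mult_right di iag inn ia)
    have dle: "\<delta> (t+1) \<omega> \<le> R \<omega>" for \<omega>
    proof -
      have sl: "f (\<theta> (t+1) \<omega>) \<ge> f (\<theta> t \<omega>) + grad (\<theta> t \<omega>) \<bullet> (\<theta> (t+1) \<omega> - \<theta> t \<omega>) - L/2 * (norm (\<theta> (t+1) \<omega> - \<theta> t \<omega>))\<^sup>2"
        by (rule smooth_lower[OF smooth])
      have d: "\<theta> (t+1) \<omega> - \<theta> t \<omega> = \<eta> *\<^sub>R g t \<omega>" using upd by simp
      have n: "(norm (g t \<omega>))\<^sup>2 = (norm (g t \<omega> - grad (\<theta> t \<omega>)))\<^sup>2 + 2*(grad (\<theta> t \<omega>) \<bullet> g t \<omega>) - (norm (grad (\<theta> t \<omega>)))\<^sup>2"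
        using norm_diff_sq[of "g t \<omega>" "grad (\<theta> t \<omega>)"] by simp
      have "(norm (\<eta> *\<^sub>R g t \<omega>))\<^sup>2 = \<eta>\<^sup>2 * (norm (g t \<omega>))\<^sup>2" using \<eta>0 by (simp add: power_mult_distrib)
      then have "f (\<theta> (t+1) \<omega>) \<ge> f (\<theta> t \<omega>) + \<eta> * (grad (\<theta> t \<omega>) \<bullet> g t \<omega>) - L/2 * (\<eta>\<^sup>2 * (norm (g t \<omega>))\<^sup>2)"
        using sl unfolding d by simp
      then show ?thesis unfolding R_def \<delta>_def n by (simp add: algebra_simps)
    qed
    have idn: "integrable M (\<delta> (t+1))"
    proof (rule Bochner_Integration.integrable_bound[OF iR])
      show "\<delta> (t+1) \<in> borel_measurable M" unfolding \<delta>_def by measurable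
      show "AE \<omega> in M. norm (\<delta> (t+1) \<omega>) \<le> norm (R \<omega>)"
        by (intro AE_I2) (use dle \<delta>nn in \<open>smt (verit) real_norm_def\<close>)
    qed
    define N where "N = (\<integral>\<omega>. (norm (g t \<omega> - grad (\<theta> t \<omega>)))\<^sup>2 \<partial>M)"
    have "E (t+1) \<le> (\<integral>\<omega>. R \<omega> \<partial>M)" unfolding E_def using idn iR dle by (intro Bochner_Integration.integral_mono) auto
    also have "(\<integral>\<omega>. R \<omega> \<partial>M) = E t - \<eta> * A t + L/2*\<eta>\<^sup>2*(N + 2 * A t - A t)"
      unfolding R_def E_def N_def using di iag inn ia Eag[unfolded A_def] by (simp add: A_def)
    finally have r1: "E (t+1) \<le> E t - \<eta> * A t + L/2*\<eta>\<^sup>2*(N + A t)" by (simp add: algebra_simps)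
    have A0: "A t \<ge> 0" unfolding A_def by simp
    have "L*\<eta>\<^sup>2 \<le> \<eta>" using \<eta>L \<eta>0 by (simp add: power2_eq_square)
    then have r2: "L/2*\<eta>\<^sup>2 * A t \<le> (\<eta> * A t)/2" using A0 by (simp add: mult_right_mono)
    have r3: "L/2*\<eta>\<^sup>2 * N \<le> L/2*\<eta>\<^sup>2 * \<sigma>\<^sup>2" using EN Lpos unfolding N_def by (intro mult_left_mono) auto
    have r4: "E (t+1) \<le> E t - (\<eta> * A t)/2 + L/2*\<eta>\<^sup>2 * \<sigma>\<^sup>2" by (rule lin_aux[OF r1 r2 r3])
    have "E t - (\<eta> * A t)/2 + L/2*\<eta>\<^sup>2 * \<sigma>\<^sup>2 = E t - \<eta>/2 * A t + L*\<eta>\<^sup>2/2*\<sigma>\<^sup>2" by simp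
    then have "E (t+1) \<le> E t - \<eta>/2 * A t + L*\<eta>\<^sup>2/2*\<sigma>\<^sup>2" using r4 by simp
    then show ?thesis using idn ia unfolding \<eta>_def by simp
  qed
  have low: "A t \<ge> 2*c*E t - c\<^sup>2*K"
    if t1: "t \<ge> 1" and di: "integrable M (\<delta> t)" and ia: "integrable M (\<lambda>\<omega>. (norm (grad (\<theta> t \<omega>)))\<^sup>2)" for t c
  proof -
    have ae: "AE \<omega> in M. (norm (grad (\<theta> t \<omega>)))\<^sup>2 \<ge> 2*c*\<delta> t \<omega> - c\<^sup>2*Hf \<omega>"
      using AE_H
    proof (rule eventually_mono)
      fix \<omega> assume h: "Ih \<omega> > 0 \<and> Hf \<omega> = 1 / Ih \<omega> \<and> ennreal (Hf \<omega>) = Inv \<omega>"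
      have Cp: "C (\<theta> t \<omega>) > 0" by (rule Cpos)
      have dn: "\<delta> t \<omega> \<ge> 0" by (rule \<delta>nn)
      have lj: "norm (grad (\<theta> t \<omega>)) \<ge> C (\<theta> t \<omega>) * \<delta> t \<omega>"
        using loj[of "\<theta> t \<omega>"] dn by (simp add: \<delta>_def fstar_def)
      have s1: "(C (\<theta> t \<omega>) * \<delta> t \<omega>)\<^sup>2 \<le> (norm (grad (\<theta> t \<omega>)))\<^sup>2"
        using lj Cp dn by (intro power_mono) auto
      have s2: "Ih \<omega> * (\<delta> t \<omega>)\<^sup>2 \<le> (C (\<theta> t \<omega>))\<^sup>2 * (\<delta> t \<omega>)\<^sup>2"
        using Ih_le[OF t1] by (intro mult_right_mono) auto
      have s3: "2*c*\<delta> t \<omega> - c\<^sup>2*Hf \<omega> \<le> Ih \<omega> * (\<delta> t \<omega>)\<^sup>2"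
      proof -
        have eq: "Ih \<omega> * (\<delta> t \<omega>)\<^sup>2 - (2*c*\<delta> t \<omega> - c\<^sup>2*Hf \<omega>) = (Ih \<omega> * \<delta> t \<omega> - c)\<^sup>2 * Hf \<omega>"
          using h by (simp add: field_simps power2_eq_square)
        have "(Ih \<omega> * \<delta> t \<omega> - c)\<^sup>2 * Hf \<omega> \<ge> 0" using Hnn[of \<omega>] by simp
        then show ?thesis using eq by linarith
      qed
      have s4: "(C (\<theta> t \<omega>) * \<delta> t \<omega>)\<^sup>2 = (C (\<theta> t \<omega>))\<^sup>2 * (\<delta> t \<omega>)\<^sup>2" by (simp add: power_mult_distrib)
      show "(norm (grad (\<theta> t \<omega>)))\<^sup>2 \<ge> 2*c*\<delta> t \<omega> - c\<^sup>2*Hf \<omega>" using s1 s2 s3 s4 by linarith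
    qed
    have "(\<integral>\<omega>. 2*c*\<delta> t \<omega> - c\<^sup>2*Hf \<omega> \<partial>M) \<le> A t"
      unfolding A_def by (rule integral_mono_AE[OF _ ia ae]) (intro Bochner_Integration.integrable_diff integrable_mult_right di Hint)
    moreover have "(\<integral>\<omega>. 2*c*\<delta> t \<omega> - c\<^sup>2*Hf \<omega> \<partial>M) = 2*c*E t - c\<^sup>2*K"
      unfolding E_def using di Hint HintK by simp
    ultimately show ?thesis by simp
  qed
  have intall: "integrable M (\<delta> (Suc k))" if "integrable M (\<delta> 1)" for k
  proof (induction k)
    case 0 then show ?case using that by simp
  next
    case (Suc k) then show ?case using step[of "Suc k"] by simp
  qed
  have goal1: "(\<forall>t\<in>{1..T}. E t > \<epsilon>) \<longrightarrow>
     E (T+1) \<le> E 1 * exp (2 * \<beta> / ((2*L*K) * ln (real T / \<beta>))) * exp (- (\<alpha> * \<epsilon> * real T / ((2*L*K) * ln (real T / \<beta>))))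
                 + exp (2 * \<beta> / ((2*L*K) * ln (real T / \<beta>))) * (4 * (2*L*K)\<^sup>2 / ((exp 1)\<^sup>2 * \<alpha>\<^sup>2)) / (2 * L) * ((ln (real T / \<beta>))\<^sup>2 * \<sigma>\<^sup>2 / (\<epsilon>\<^sup>2 * real T))"
  proof
    assume H: "\<forall>t\<in>{1..T}. E t > \<epsilon>"
    have E1: "E 1 > \<epsilon>" using H beta T0 by auto
    have i1: "integrable M (\<delta> 1)"
      using E1 eps not_integrable_integral_eq[of M "\<delta> 1"] unfolding E_def by force
    have iall: "integrable M (\<delta> t)" if "t \<ge> 1" for t
      using intall[OF i1, of "t - 1"] that by simp
    have Kpos: "K > 0"
    proof (rule ccontr)
      assume "\<not> K > 0"
      then have K00: "K = 0" using K0 by simp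
      define c where "c = (A 1 + 1) / (2 * E 1)"
      have "A 1 \<ge> 2*c*E 1 - c\<^sup>2*K" using low[of 1 c] iall step[of 1] by simp
      then have "A 1 \<ge> A 1 + 1" using E1 eps K00 unfolding c_def by (simp add: field_simps)
      then show False by simp
    qed
    have rec: "E (t+1) \<le> (1 - ((\<beta>/real T) powr (1/real T))^t*\<epsilon>/(2*L*K)) * E t
                 + ((\<beta>/real T) powr (1/real T))^(2*t)*\<sigma>\<^sup>2/(2*L)"
      if tt: "1 \<le> t" "t \<le> T" for t
    proof -
      have Et: "E t > \<epsilon>" using H tt by auto
      have st: "E (t+1) \<le> E t - (1/L*\<alpha>^t)/2 * A t + L*(1/L*\<alpha>^t)\<^sup>2/2*\<sigma>\<^sup>2"
        and ia: "integrable M (\<lambda>\<omega>. (norm (grad (\<theta> t \<omega>)))\<^sup>2)"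
        using step[OF tt(1) iall[OF tt(1)]] by auto
      have "A t \<ge> 2*(E t / K)*E t - (E t / K)\<^sup>2*K" using low[OF tt(1) iall[OF tt(1)] ia] .
      also have "2*(E t / K)*E t - (E t / K)\<^sup>2*K = (E t)\<^sup>2 / K" using Kpos by (simp add: power2_eq_square field_simps)
      also have "(E t)\<^sup>2 / K \<ge> \<epsilon> * E t / K"
        using Et eps Kpos by (intro divide_right_mono) (auto simp: power2_eq_square intro!: mult_right_mono)
      finally have At: "A t \<ge> \<epsilon> * E t / K" .
      have "(1/L*\<alpha>^t)/2 * A t \<ge> (1/L*\<alpha>^t)/2 * (\<epsilon> * E t / K)"
        using At Lpos a0 by (intro mult_left_mono) auto
      moreover have "(1/L*\<alpha>^t)/2 * (\<epsilon> * E t / K) = \<alpha>^t*\<epsilon>/(2*L*K) * E t"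
        using Lpos Kpos by (simp add: field_simps)
      moreover have "L*(1/L*\<alpha>^t)\<^sup>2/2*\<sigma>\<^sup>2 = \<alpha>^(2*t)*\<sigma>\<^sup>2/(2*L)"
      proof -
        have p: "\<alpha>^(2*t) = (\<alpha>^t)\<^sup>2" by (simp add: power_mult[symmetric] mult.commute)
        show ?thesis unfolding p using Lpos by (simp add: power2_eq_square field_simps)
      qed
      ultimately show ?thesis using st unfolding \<alpha>_def by (simp add: algebra_simps)
    qed
    show "E (T+1) \<le> E 1 * exp (2 * \<beta> / ((2*L*K) * ln (real T / \<beta>))) * exp (- (\<alpha> * \<epsilon> * real T / ((2*L*K) * ln (real T / \<beta>))))
                 + exp (2 * \<beta> / ((2*L*K) * ln (real T / \<beta>))) * (4 * (2*L*K)\<^sup>2 / ((exp 1)\<^sup>2 * \<alpha>\<^sup>2)) / (2 * L) * ((ln (real T / \<beta>))\<^sup>2 * \<sigma>\<^sup>2 / (\<epsilon>\<^sup>2 * real T))"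
      unfolding \<alpha>_def
      by (rule final_bound[OF beta eps _ Lpos]) (use Lpos Kpos rec H in \<open>auto intro: less_imp_le[OF order.strict_trans[OF eps(1)]]\<close>)
  qed
  have goal2: "\<not> (\<forall>t\<in>{1..T}. E t > \<epsilon>) \<longrightarrow> Min (E ` {1..T}) \<le> \<epsilon>"
  proof
    assume "\<not> (\<forall>t\<in>{1..T}. E t > \<epsilon>)"
    then obtain t where "t \<in> {1..T}" "E t \<le> \<epsilon>" by auto
    then show "Min (E ` {1..T}) \<le> \<epsilon>" by (meson Min_le finite_atLeastAtMost finite_imageI image_eqI order_trans)
  qed
  have kap: "\<And>X::real. 2 * L / (1 / X) = 2*L*X" by simp
  show ?thesis
    unfolding Let_def
    unfolding kap
    using goal1 goal2 unfolding E_def \<delta>_def fstar_def \<alpha>_def K_def Inv_def Ih_def by (rule conjI)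
qed

end
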